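(* Let $G$ satisfy conditions (1)–(5) below, with $d$ vertices and genus $g$, and let $C_G\subset\mathbb{P}^{d-g}$ be the union of lines defined by an admissible labeling of $\tilde G$ (see context). Suppose $w$ is a vertex of degree $3$ whose edges are labeled $e_j$, $e_k$, $e_j-e_k$. If we interchange the labels $e_j$ and $e_j-e_k$ on the edges meeting at $w$, then the union of lines associated to the new labeling is the image of the original $C_G$ under a linear automorphism $\sigma$ of $\mathbb{P}^{d-g}$ that is an involution ($\sigma^2=\mathrm{id}$).
   Context: Work over an algebraically closed field $k$ of characteristic zero, $S=k[x_0,\ldots,x_{d-g}]$. Conditions on the finite graph $G=(V,E)$, $d=|V|$, $g=|E|-d+1$: (1) connected; (2) simple; (3) every vertex has degree at most $3$ and some vertex has degree less than $3$; (4) the shortest path between any two distinct vertices of degree $3$ has at least $3$ edges; (5) no triangles. Let $\tilde G$ be obtained from $G$ by attaching one loop at each vertex of degree $1$. An admissible labeling of the edges of $\tilde G$: for each vertex of degree $3$ choose two indices $j\neq k$ in $\{0,\ldots,d-g\}$ and label its three edges $e_j,e_k,e_j-e_k$; label each remaining edge $e_i$ with an unused index, distinct indices being used throughout. An index $i$ appears on an edge labeled $e_i$ or $\pm(e_i-e_j)$. For each vertex $v$: if $v$ has degree $3$ with edges $e_j,e_k,e_j-e_k$, $I_v=(x_i : i\neq j,k)$; otherwise $I_v$ is generated by the $x_i$ with $i$ not appearing on an edge of $\tilde G$ at $v$, together with $x_j-x_k$ if some edge at $v$ is labeled $e_j-e_k$. Then $L_v=V(I_v)$ is a line and $C_G=\bigcup_v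 L_v$. *)

theory Defs
  imports "HOL-Computational_Algebra.Polynomial" "Jordan_Normal_Form.Matrix"
begin

definition deg :: "'v set set \<Rightarrow> 'v \<Rightarrow> nat" where
  "deg E v = card {e \<in> E. v \<in> e}"

definition adj :: "'v set set \<Rightarrow> 'v \<Rightarrow> 'v \<Rightarrow> bool" where
  "adj E u v \<longleftrightarrow> u \<noteq> v \<and> {u, v} \<in> E"

definition simple_graph :: "'v set \<Rightarrow> 'v set set \<Rightarrow> bool" where
  "simple_graph V E \<longleftrightarrow> finite V \<and>
     (\<forall>e \<in> E. \<exists>u v. u \<in> V \<and> v \<in> V \<and> u \<noteq> v \<and> e = {u, v})"

definition connected_graph :: "'v set \<Rightarrow> 'v set set \<Rightarrow> bool" where
  "connected_graph V E \<longleftrightarrow> V \<noteq> {} \<and> (\<forall>u \<in> V. \<forall>v \<in> V. (adj E)\<^sup>*\<^sup>* u v)"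

definition good_graph :: "'v set \<Rightarrow> 'v set set \<Rightarrow> bool" where
  "good_graph V E \<longleftrightarrow>
     connected_graph V E \<and>
     simple_graph V E \<and>
     (\<forall>v \<in> V. deg E v \<le> 3) \<and> (\<exists>v \<in> V. deg E v < 3) \<and>
     \<comment> \<open>(4): no path with 1 or 2 edges joins two distinct degree-3 vertices\<close>
     (\<forall>u \<in> V. \<forall>v \<in> V. u \<noteq> v \<and> deg E u = 3 \<and> deg E v = 3 \<longrightarrow>
         \<not> adj E u v \<and> \<not> (\<exists>x. adj E u x \<and> adj E x v)) \<and>
     \<comment> \<open>(5): no triangles\<close>
     \<not> (\<exists>a b c. adj E a b \<and> adj E b c \<and> adj E a c)"

text \<open>d = |V|, g = |E| - d + 1, and the ambient space is P^(d-g).\<close>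
definition genus :: "'v set \<Rightarrow> 'v set set \<Rightarrow> int" where
  "genus V E = int (card E) - int (card V) + 1"

definition pdim :: "'v set \<Rightarrow> 'v set set \<Rightarrow> nat" where
  "pdim V E = nat (int (card V) - genus V E)"

datatype 'v tedge = GEdge "'v set" | Loop 'v

definition tedges :: "'v set \<Rightarrow> 'v set set \<Rightarrow> 'v tedge set" where
  "tedges V E = GEdge ` E \<union> Loop ` {v \<in> V. deg E v = 1}"

fun incident :: "'v tedge \<Rightarrow> 'v \<Rightarrow> bool" where
  "incident (GEdge e) v \<longleftrightarrow> v \<in> e"
| "incident (Loop u) v \<longleftrightarrow> u = v"

text \<open>A label is either e_i (Single i) or e_j - e_k (Diff j k).\<close>
datatype label = Single nat | Diff nat nat

fun lidx :: "label \<Rightarrow> nat set" where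
  "lidx (Single i) = {i}"
| "lidx (Diff j k) = {j, k}"

definition edges_at :: "'v set \<Rightarrow> 'v set set \<Rightarrow> 'v \<Rightarrow> 'v tedge set" where
  "edges_at V E v = {t \<in> tedges V E. incident t v}"

definition admissible :: "'v set \<Rightarrow> 'v set set \<Rightarrow> ('v tedge \<Rightarrow> label) \<Rightarrow> bool" where
  "admissible V E lab \<longleftrightarrow>
     \<comment> \<open>all indices lie in {0..d-g}\<close>
     (\<forall>t \<in> tedges V E. lidx (lab t) \<subseteq> {0..pdim V E}) \<and>
     \<comment> \<open>at a degree-3 vertex the three edges carry e_j, e_k, e_j - e_k\<close>
     (\<forall>v \<in> V. deg E v = 3 \<longrightarrow>
        (\<exists>j k. j \<noteq> k \<and> inj_on lab (edges_at V E v) \<and>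
               lab ` edges_at V E v = {Single j, Single k, Diff j k})) \<and>
     \<comment> \<open>the remaining edges carry some e_i\<close>
     (\<forall>t \<in> tedges V E. (\<not> (\<exists>v \<in> V. deg E v = 3 \<and> incident t v)) \<longrightarrow>
        (\<exists>i. lab t = Single i)) \<and>
     \<comment> \<open>distinct indices are used throughout\<close>
     (\<forall>t1 \<in> tedges V E. \<forall>t2 \<in> tedges V E. t1 \<noteq> t2 \<and> lidx (lab t1) \<inter> lidx (lab t2) \<noteq> {}
        \<longrightarrow> (\<exists>v \<in> V. deg E v = 3 \<and> incident t1 v \<and> incident t2 v))"

text \<open>Linear forms in x_0..x_n are represented by their coefficient vectors.\<close>

definition appearing :: "'v set \<Rightarrow> 'v set set \<Rightarrow> ('v tedge \<Rightarrow> label) \<Rightarrow> 'v \<Rightarrow> nat set" where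
  "appearing V E lab v = (\<Union>t \<in> edges_at V E v. lidx (lab t))"

definition ideal_gens ::
  "'v set \<Rightarrow> 'v set set \<Rightarrow> ('v tedge \<Rightarrow> label) \<Rightarrow> 'v \<Rightarrow> 'k::field vec set" where
  "ideal_gens V E lab v =
     (let n = pdim V E in
      {unit_vec (n+1) i | i. i \<le> n \<and> i \<notin> appearing V E lab v} \<union>
      (if deg E v = 3 then {}
       else {unit_vec (n+1) j - unit_vec (n+1) k | j k.
               \<exists>t \<in> edges_at V E v. lab t = Diff j k}))"

text \<open>Points of P^n are represented by nonzero vectors of k^(n+1); a subset of P^n
  by the set of all nonzero vectors representing its points.\<close>
definition line_at ::
  "'v set \<Rightarrow> 'v set set \<Rightarrow> ('v tedge \<Rightarrow> label) \<Rightarrow> 'v \<Rightarrow> 'k::field vec set" where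
  "line_at V E lab v =
     {x \<in> carrier_vec (pdim V E + 1). x \<noteq> 0\<^sub>v (pdim V E + 1) \<and>
        (\<forall>f \<in> ideal_gens V E lab v. f \<bullet> x = 0)}"

definition CG :: "'v set \<Rightarrow> 'v set set \<Rightarrow> ('v tedge \<Rightarrow> label) \<Rightarrow> 'k::field vec set" where
  "CG V E lab = (\<Union>v \<in> V. line_at V E lab v)"

end

theory Submission
  imports Defs
begin

definition Qc :: "'v set \<Rightarrow> 'v set set \<Rightarrow> ('v tedge \<Rightarrow> label) \<Rightarrow> 'v \<Rightarrow> 'k::field vec \<Rightarrow> bool" where
  "Qc V E l v x \<longleftrightarrow> (\<forall>i\<le>pdim V E. i \<notin> appearing V E l v \<longrightarrow> x$i = 0) \<and>
     (deg E v \<noteq> 3 \<longrightarrow> (\<forall>t\<in>edges_at V E v. \<forall>p q. l t = Diff p q \<longrightarrow> x$p = x$q))"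

lemma line_at_char:
  assumes "\<forall>t\<in>edges_at V E v. lidx (l t) \<subseteq> {0..pdim V E}"
  shows "(line_at V E l v :: 'k::field vec set) =
    {x \<in> carrier_vec (pdim V E+1). x \<noteq> 0\<^sub>v (pdim V E+1) \<and> Qc V E l v x}"
proof -
  define n where "n = pdim V E"
  have eq: "(\<forall>f\<in>(ideal_gens V E l v :: 'k vec set). f \<bullet> x = 0) \<longleftrightarrow> Qc V E l v x"
    if x: "x \<in> carrier_vec (n+1)" for x :: "'k vec"
  proof
    assume H: "\<forall>f\<in>(ideal_gens V E l v :: 'k vec set). f \<bullet> x = 0"
    show "Qc V E l v x" unfolding Qc_def n_def[symmetric]
    proof (intro conjI allI impI ballI)
      fix i assume i: "i \<le> n" "i \<notin> appearing V E l v"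
      then have "unit_vec (n+1) i \<in> (ideal_gens V E l v :: 'k vec set)"
        unfolding ideal_gens_def Let_def n_def by auto
      hence "unit_vec (n+1) i \<bullet> x = 0" using H by blast
      thus "x$i = 0" using x i by simp
    next
      fix t p q assume d: "deg E v \<noteq> 3" and t: "t \<in> edges_at V E v" and l: "l t = Diff p q"
      then have "unit_vec (n+1) p - unit_vec (n+1) q \<in> (ideal_gens V E l v :: 'k vec set)"
        unfolding ideal_gens_def Let_def n_def by auto
      hence h: "(unit_vec (n+1) p - unit_vec (n+1) q) \<bullet> x = 0" using H by blast
      have pq: "p \<le> n" "q \<le> n" using assms t l unfolding n_def by auto
      have "(unit_vec (n+1) p - unit_vec (n+1) q) \<bullet> x = x$p - x$q"
        by (subst minus_scalar_prod_distrib[of _ "n+1"]) (use x pq in auto)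
      thus "x$p = x$q" using h by simp
    qed
  next
    assume Q: "Qc V E l v x"
    show "\<forall>f\<in>(ideal_gens V E l v :: 'k vec set). f \<bullet> x = 0"
    proof
      fix f assume f: "f \<in> (ideal_gens V E l v :: 'k vec set)"
      then have "(\<exists>i. f = unit_vec (n+1) i \<and> i \<le> n \<and> i \<notin> appearing V E l v) \<or>
         (deg E v \<noteq> 3 \<and> (\<exists>p q. f = unit_vec (n+1) p - unit_vec (n+1) q \<and>
             (\<exists>t\<in>edges_at V E v. l t = Diff p q)))"
        unfolding ideal_gens_def Let_def n_def by (auto split: if_splits)
      then show "f \<bullet> x = 0"
      proof
        assume "\<exists>i. f = unit_vec (n+1) i \<and> i \<le> n \<and> i \<notin> appearing V E l v"
        then obtain i where i: "f = unit_vec (n+1) i" "i \<le> n" "i \<notin> appearing V E l v" by blast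
        then show ?thesis using Q x unfolding Qc_def n_def by simp
      next
        assume "deg E v \<noteq> 3 \<and> (\<exists>p q. f = unit_vec (n+1) p - unit_vec (n+1) q \<and>
             (\<exists>t\<in>edges_at V E v. l t = Diff p q))"
        then obtain p q t where d: "deg E v \<noteq> 3" and f: "f = unit_vec (n+1) p - unit_vec (n+1) q"
          and t: "t \<in> edges_at V E v" "l t = Diff p q" by blast
        have pq: "p \<le> n" "q \<le> n" using assms t unfolding n_def by auto
        have "(unit_vec (n+1) p - unit_vec (n+1) q) \<bullet> x = x$p - x$q"
          by (subst minus_scalar_prod_distrib[of _ "n+1"]) (use x pq in auto)
        moreover have "x$p = x$q" using Q d t unfolding Qc_def by blast
        ultimately show ?thesis using f by simp
      qed
    qed
  qed
  show ?thesis unfolding line_at_def n_def[symmetric] using eq by auto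
qed


lemma edge_at_deg3:
  assumes G: "good_graph V E" and w: "w \<in> V" "deg E w = 3" and t: "t \<in> edges_at V E w"
  shows "\<exists>u\<in>V. u \<noteq> w \<and> t = GEdge {w,u} \<and> adj E w u"
proof -
  have tt: "t \<in> tedges V E" "incident t w" using t unfolding edges_at_def by auto
  show ?thesis
  proof (cases t)
    case (Loop u)
    then have "u = w" "deg E u = 1" using tt unfolding tedges_def by auto
    then show ?thesis using w by simp
  next
    case (GEdge e)
    then have e: "e \<in> E" "w \<in> e" using tt unfolding tedges_def by auto
    have sg: "simple_graph V E" using G unfolding good_graph_def by blast
    obtain p q where pq: "p \<in> V" "q \<in> V" "p \<noteq> q" "e = {p,q}"
      using sg e(1) unfolding simple_graph_def by blast
    show ?thesis
    proof (cases "w = p")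
      case True
      then show ?thesis using pq e GEdge unfolding adj_def by (intro bexI[of _ q]) auto
    next
      case False
      then have "w = q" using pq e by auto
      then show ?thesis using pq e GEdge unfolding adj_def by (intro bexI[of _ p]) (auto simp: insert_commute)
    qed
  qed
qed

lemma deg3_unique:
  assumes G: "good_graph V E" and w: "w \<in> V" "deg E w = 3" and t: "t \<in> edges_at V E w"
    and z: "z \<in> V" "deg E z = 3" "incident t z"
  shows "z = w"
proof (rule ccontr)
  assume ne: "z \<noteq> w"
  obtain u where u: "u \<in> V" "u \<noteq> w" "t = GEdge {w,u}" "adj E w u"
    using edge_at_deg3[OF G w t] by blast
  then have "z = u" using z ne by auto
  have c4: "\<forall>u \<in> V. \<forall>v \<in> V. u \<noteq> v \<and> deg E u = 3 \<and> deg E v = 3 \<longrightarrow>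
         \<not> adj E u v \<and> \<not> (\<exists>x. adj E u x \<and> adj E x v)" using G unfolding good_graph_def by blast
  show False using c4 w z u ne \<open>z = u\<close> by metis
qed

lemma two_edges:
  assumes G: "good_graph V E" and w: "w \<in> V" "deg E w = 3"
    and t: "t1 \<in> edges_at V E w" "t2 \<in> edges_at V E w"
    and v: "v \<noteq> w" "incident t1 v" "incident t2 v"
  shows "t1 = t2"
proof -
  obtain u1 where u1: "t1 = GEdge {w,u1}" using edge_at_deg3[OF G w t(1)] by blast
  obtain u2 where u2: "t2 = GEdge {w,u2}" using edge_at_deg3[OF G w t(2)] by blast
  show ?thesis using u1 u2 v by auto
qed

lemma edges_at_w:
  assumes adm: "admissible V E lab" and w: "w \<in> V" "deg E w = 3"
    and abc: "a \<in> edges_at V E w" "b \<in> edges_at V E w" "c \<in> edges_at V E w"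
    and l: "lab a = Single j" "lab b = Single k" "lab c = Diff j k"
  shows "edges_at V E w = {a,b,c} \<and> j \<noteq> k"
proof -
  obtain j' k' where jk: "j' \<noteq> k'" "inj_on lab (edges_at V E w)"
    "lab ` edges_at V E w = {Single j', Single k', Diff j' k'}"
    using adm w unfolding admissible_def by blast
  have "Diff j k \<in> lab ` edges_at V E w" using abc l by (metis imageI)
  then have "j = j'" "k = k'" using jk by auto
  have sub: "t \<in> {a,b,c}" if t: "t \<in> edges_at V E w" for t
  proof -
    have "lab t \<in> {lab a, lab b, lab c}" using t jk l \<open>j = j'\<close> \<open>k = k'\<close> by auto
    then show ?thesis using jk(2) t abc by (auto dest: inj_onD)
  qed
  have "edges_at V E w = {a,b,c}" using sub abc by blast
  moreover have "j \<noteq> k" using jk \<open>j = j'\<close> \<open>k = k'\<close> by simp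
  ultimately show ?thesis by blast
qed

lemma idx_avoid:
  assumes G: "good_graph V E" and adm: "admissible V E lab" and w: "w \<in> V" "deg E w = 3"
    and abc: "a \<in> edges_at V E w" "b \<in> edges_at V E w" "c \<in> edges_at V E w"
    and l: "lab a = Single j" "lab b = Single k" "lab c = Diff j k"
    and t: "t \<in> tedges V E" "t \<notin> {a,b,c}"
  shows "j \<notin> lidx (lab t) \<and> k \<notin> lidx (lab t)"
proof -
  have W: "edges_at V E w = {a,b,c}" using edges_at_w[OF adm w abc l] by blast
  have gen: "False" if s: "s \<in> edges_at V E w" "i \<in> lidx (lab s)" "i \<in> lidx (lab t)" for s i
  proof -
    have st: "s \<noteq> t" using W s t by auto
    have sT: "s \<in> tedges V E" using s unfolding edges_at_def by auto
    have c4: "\<forall>t1 \<in> tedges V E. \<forall>t2 \<in> tedges V E. t1 \<noteq> t2 \<and> lidx (lab t1) \<inter> lidx (lab t2) \<noteq> {}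
        \<longrightarrow> (\<exists>v \<in> V. deg E v = 3 \<and> incident t1 v \<and> incident t2 v)"
      using adm unfolding admissible_def by blast
    have "lidx (lab t) \<inter> lidx (lab s) \<noteq> {}" using s by blast
    then obtain z where z: "z \<in> V" "deg E z = 3" "incident t z" "incident s z"
      using c4 t(1) sT st by metis
    have "z = w" using deg3_unique[OF G w s(1) z(1,2,4)] .
    then have "t \<in> edges_at V E w" using t z unfolding edges_at_def by auto
    then show False using W t by auto
  qed
  show ?thesis using gen[OF abc(1), of j] gen[OF abc(2), of k] l by auto
qed


lemma app_split:
  "i \<in> (\<Union>t\<in>T. f t) \<longleftrightarrow> (a \<in> T \<and> i \<in> f a) \<or> (b \<in> T \<and> i \<in> f b) \<or> (c \<in> T \<and> i \<in> f c) \<or> (\<exists>t\<in>T-{a,b,c}. i \<in> f t)"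
  by blast

lemma forall_split:
  "(\<forall>i\<le>n. \<not> P i \<longrightarrow> y i = 0) \<longleftrightarrow>
   ((\<forall>i\<le>n. \<not> (P i \<or> i = k) \<longrightarrow> y i = 0) \<and> (k \<le> n \<and> \<not> P k \<longrightarrow> y k = 0))"
  by auto

lemma key:
  assumes G: "good_graph V E" and adm: "admissible V E lab" and w: "w \<in> V" "deg E w = 3"
    and abc: "a \<in> edges_at V E w" "b \<in> edges_at V E w" "c \<in> edges_at V E w"
    and l: "lab a = Single j" "lab b = Single k" "lab c = Diff j k"
    and v: "v \<in> V"
    and sx: "\<And>r. r \<le> pdim V E \<Longrightarrow> s$r = (if r = k then x$j - x$k else x$r)"
  shows "Qc V E (lab(a := Diff j k, c := Single j)) v (s :: 'k::field vec) \<longleftrightarrow> Qc V E lab v x"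
proof -
  define n where "n = pdim V E"
  define lab' where "lab' = lab(a := Diff j k, c := Single j)"
  have W: "edges_at V E w = {a,b,c}" and jk: "j \<noteq> k" using edges_at_w[OF adm w abc l] by auto
  have dist: "a \<noteq> b" "a \<noteq> c" "b \<noteq> c" using l jk by auto
  have tA: "a \<in> tedges V E" "b \<in> tedges V E" "c \<in> tedges V E" using abc unfolding edges_at_def by auto
  have rng: "\<forall>t\<in>tedges V E. lidx (lab t) \<subseteq> {0..n}" using adm unfolding admissible_def n_def by blast
  have jn: "j \<le> n" "k \<le> n" using rng tA l by auto
  have l': "lab' a = Diff j k" "lab' b = Single k" "lab' c = Single j"
    "\<And>t. t \<notin> {a,b,c} \<Longrightarrow> lab' t = lab t"
    unfolding lab'_def using dist l by auto
  have avoid: "\<And>t. t \<in> tedges V E \<Longrightarrow> t \<notin> {a,b,c} \<Longrightarrow> j \<notin> lidx (lab t) \<and> k \<notin> lidx (lab t)"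
    using idx_avoid[OF G adm w abc l] by blast
  have sx': "\<And>p. p \<le> n \<Longrightarrow> p \<noteq> k \<Longrightarrow> s$p = x$p" using sx unfolding n_def by simp
  have sk: "s$k = x$j - x$k" using sx jn unfolding n_def by simp
  show ?thesis
  proof (cases "v = w")
    case True
    have A1: "appearing V E lab v = {j,k}" "appearing V E lab' v = {j,k}"
      unfolding appearing_def True W using l l'(1-3) by auto
    show ?thesis unfolding lab'_def[symmetric] Qc_def n_def[symmetric] A1
      using True w sx' by auto
  next
    case False
    define T where "T = edges_at V E v"
    have TT: "\<And>t. t \<in> T \<Longrightarrow> t \<in> tedges V E \<and> incident t v" unfolding T_def edges_at_def by auto
    have d3: "deg E v \<noteq> 3" if "t \<in> {a,b,c}" "t \<in> T" for t
    proof
      assume "deg E v = 3"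
      then have "v = w" using deg3_unique[OF G w _ v] that W TT by auto
      then show False using False by simp
    qed
    have one: "t1 = t2" if "t1 \<in> {a,b,c}" "t2 \<in> {a,b,c}" "t1 \<in> T" "t2 \<in> T" for t1 t2
      using two_edges[OF G w, of t1 t2 v] that W TT False by auto
    define MS where "MS = (\<Union>t\<in>T-{a,b,c}. lidx (lab t))"
    have MSjk: "j \<notin> MS" "k \<notin> MS" unfolding MS_def using avoid TT by auto
    define D where "D = (\<lambda>y :: 'k vec. \<forall>t\<in>T-{a,b,c}. \<forall>p q. lab t = Diff p q \<longrightarrow> y$p = y$q)"
    have D: "D s \<longleftrightarrow> D x"
    proof -
      have "s$p = x$p" if "t \<in> T-{a,b,c}" "p \<in> lidx (lab t)" for t p
      proof -
        have "t \<in> tedges V E" using TT that by blast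
        then have "lidx (lab t) \<subseteq> {0..n}" using rng by blast
        then have "p \<le> n" using that by auto
        moreover have "p \<noteq> k" using avoid TT that by auto
        ultimately show ?thesis using sx' by simp
      qed
      then show ?thesis unfolding D_def by (metis lidx.simps(2) insertI1 insertCI)
    qed
    have App1: "i \<in> appearing V E lab v \<longleftrightarrow>
        (a \<in> T \<and> i = j) \<or> (b \<in> T \<and> i = k) \<or> (c \<in> T \<and> (i = j \<or> i = k)) \<or> i \<in> MS" for i
    proof -
      have "i \<in> appearing V E lab v \<longleftrightarrow> (a \<in> T \<and> i \<in> lidx (lab a)) \<or> (b \<in> T \<and> i \<in> lidx (lab b)) \<or> (c \<in> T \<and> i \<in> lidx (lab c)) \<or> (\<exists>t\<in>T-{a,b,c}. i \<in> lidx (lab t))"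
        unfolding appearing_def T_def[symmetric] by (rule app_split)
      moreover have "(\<exists>t\<in>T-{a,b,c}. i \<in> lidx (lab t)) \<longleftrightarrow> i \<in> MS"
        unfolding MS_def by simp
      ultimately show ?thesis using l by simp
    qed
    have App2: "i \<in> appearing V E lab' v \<longleftrightarrow>
        (a \<in> T \<and> (i = j \<or> i = k)) \<or> (b \<in> T \<and> i = k) \<or> (c \<in> T \<and> i = j) \<or> i \<in> MS" for i
    proof -
      have "i \<in> appearing V E lab' v \<longleftrightarrow> (a \<in> T \<and> i \<in> lidx (lab' a)) \<or> (b \<in> T \<and> i \<in> lidx (lab' b)) \<or> (c \<in> T \<and> i \<in> lidx (lab' c)) \<or> (\<exists>t\<in>T-{a,b,c}. i \<in> lidx (lab' t))"
        unfolding appearing_def T_def[symmetric] by (rule app_split)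
      moreover have "(\<exists>t\<in>T-{a,b,c}. i \<in> lidx (lab' t)) \<longleftrightarrow> i \<in> MS"
      proof -
        have eqs: "\<And>t. t \<in> T-{a,b,c} \<Longrightarrow> lidx (lab' t) = lidx (lab t)" by (metis DiffD2 l'(4))
        have "(\<exists>t\<in>T-{a,b,c}. i \<in> lidx (lab' t)) \<longleftrightarrow> (\<exists>t\<in>T-{a,b,c}. i \<in> lidx (lab t))"
          by (rule bex_cong) (simp_all add: eqs)
        then show ?thesis unfolding MS_def by simp
      qed
      ultimately show ?thesis using l'(1-3) by simp
    qed
    have Df1: "(\<forall>t\<in>T. \<forall>p q. lab t = Diff p q \<longrightarrow> y$p = y$q) \<longleftrightarrow> ((c \<in> T \<longrightarrow> y$j = y$k) \<and> D y)" for y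
    proof
      assume H: "\<forall>t\<in>T. \<forall>p q. lab t = Diff p q \<longrightarrow> y$p = y$q"
      have "c \<in> T \<longrightarrow> y$j = y$k" using H l(3) by blast
      moreover have "D y" unfolding D_def
      proof (intro ballI allI impI)
        fix t p q assume t: "t \<in> T-{a,b,c}" "lab t = Diff p q"
        have "lab t = lab t" using t(1) by blast
        then show "y$p = y$q" using H t by (metis DiffD1)
      qed
      ultimately show "(c \<in> T \<longrightarrow> y$j = y$k) \<and> D y" by blast
    next
      assume R: "(c \<in> T \<longrightarrow> y$j = y$k) \<and> D y"
      show "\<forall>t\<in>T. \<forall>p q. lab t = Diff p q \<longrightarrow> y$p = y$q"
      proof (intro ballI allI impI)
        fix t p q assume t: "t \<in> T" "lab t = Diff p q"
        consider "t = c" | "t = a" | "t = b" | "t \<in> T-{a,b,c}" using t(1) by blast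
        then show "y$p = y$q"
        proof cases
          case 1 then show ?thesis using t l(3) R by simp
        next
          case 2 then show ?thesis using t l(1) by simp
        next
          case 3 then show ?thesis using t l(2) by simp
        next
          case 4
          have "lab t = lab t" using 4 by blast
          then show ?thesis using R t 4 unfolding D_def by simp
        qed
      qed
    qed
    have Df2: "(\<forall>t\<in>T. \<forall>p q. lab' t = Diff p q \<longrightarrow> y$p = y$q) \<longleftrightarrow> ((a \<in> T \<longrightarrow> y$j = y$k) \<and> D y)" for y
    proof
      assume H: "\<forall>t\<in>T. \<forall>p q. lab' t = Diff p q \<longrightarrow> y$p = y$q"
      have "a \<in> T \<longrightarrow> y$j = y$k" using H l'(1) by blast
      moreover have "D y" unfolding D_def
      proof (intro ballI allI impI)
        fix t p q assume t: "t \<in> T-{a,b,c}" "lab t = Diff p q"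
        have "lab' t = lab t" using t(1) l'(4) by blast
        then show "y$p = y$q" using H t by (metis DiffD1)
      qed
      ultimately show "(a \<in> T \<longrightarrow> y$j = y$k) \<and> D y" by blast
    next
      assume R: "(a \<in> T \<longrightarrow> y$j = y$k) \<and> D y"
      show "\<forall>t\<in>T. \<forall>p q. lab' t = Diff p q \<longrightarrow> y$p = y$q"
      proof (intro ballI allI impI)
        fix t p q assume t: "t \<in> T" "lab' t = Diff p q"
        consider "t = a" | "t = b" | "t = c" | "t \<in> T-{a,b,c}" using t(1) by blast
        then show "y$p = y$q"
        proof cases
          case 1 then show ?thesis using t l'(1) R by simp
        next
          case 2 then show ?thesis using t l'(2) by simp
        next
          case 3 then show ?thesis using t l'(3) by simp
        next
          case 4
          have "lab' t = lab t" using 4 l'(4) by blast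
          then show ?thesis using R t 4 unfolding D_def by simp
        qed
      qed
    qed
    have P1: "(\<forall>i\<le>n. \<not> (i = j \<or> i = k \<or> i \<in> MS) \<longrightarrow> s$i = 0) \<longleftrightarrow>
              (\<forall>i\<le>n. \<not> (i = j \<or> i = k \<or> i \<in> MS) \<longrightarrow> x$i = 0)"
      using sx' by auto
    have Q1: "Qc V E lab v x \<longleftrightarrow> (\<forall>i\<le>n. \<not> ((a \<in> T \<and> i = j) \<or> (b \<in> T \<and> i = k) \<or> (c \<in> T \<and> (i = j \<or> i = k)) \<or> i \<in> MS) \<longrightarrow> x$i = 0)
        \<and> (deg E v \<noteq> 3 \<longrightarrow> ((c \<in> T \<longrightarrow> x$j = x$k) \<and> D x))"
      unfolding Qc_def n_def[symmetric] T_def[symmetric] App1 Df1 by simp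
    have Q2: "Qc V E lab' v s \<longleftrightarrow> (\<forall>i\<le>n. \<not> ((a \<in> T \<and> (i = j \<or> i = k)) \<or> (b \<in> T \<and> i = k) \<or> (c \<in> T \<and> i = j) \<or> i \<in> MS) \<longrightarrow> s$i = 0)
        \<and> (deg E v \<noteq> 3 \<longrightarrow> ((a \<in> T \<longrightarrow> s$j = s$k) \<and> D s))"
      unfolding Qc_def n_def[symmetric] T_def[symmetric] App2 Df2 by simp
    have sj: "s$j = x$j" using sx' jn jk by simp
    consider "a \<in> T" "b \<notin> T" "c \<notin> T" | "b \<in> T" "a \<notin> T" "c \<notin> T" | "c \<in> T" "a \<notin> T" "b \<notin> T"
      | "a \<notin> T" "b \<notin> T" "c \<notin> T"
      using one dist by blast
    then show ?thesis
    proof cases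
      case 1
      have dd: "deg E v \<noteq> 3" using d3 1 by blast
      have "Qc V E lab v x \<longleftrightarrow> (\<forall>i\<le>n. \<not> (i = j \<or> i \<in> MS) \<longrightarrow> x$i = 0) \<and> D x"
        using Q1 1 dd by simp
      also have "\<dots> \<longleftrightarrow> (\<forall>i\<le>n. \<not> (i = j \<or> i = k \<or> i \<in> MS) \<longrightarrow> x$i = 0) \<and> x$k = 0 \<and> D x"
        using jn jk MSjk by (subst forall_split[where k=k]) auto
      also have "\<dots> \<longleftrightarrow> Qc V E lab' v s"
        using Q2 1 dd P1 D sj sk by auto
      finally show ?thesis unfolding lab'_def by simp
    next
      case 2
      have "Qc V E lab v x \<longleftrightarrow> (\<forall>i\<le>n. \<not> (i = k \<or> i \<in> MS) \<longrightarrow> x$i = 0) \<and> (deg E v \<noteq> 3 \<longrightarrow> D x)"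
        using Q1 2 by simp
      also have "\<dots> \<longleftrightarrow> Qc V E lab' v s"
        using Q2 2 D sx' by auto
      finally show ?thesis unfolding lab'_def by simp
    next
      case 3
      have dd: "deg E v \<noteq> 3" using d3 3 by blast
      have "Qc V E lab' v s \<longleftrightarrow> (\<forall>i\<le>n. \<not> (i = j \<or> i \<in> MS) \<longrightarrow> s$i = 0) \<and> D s"
        using Q2 3 dd by simp
      also have "\<dots> \<longleftrightarrow> (\<forall>i\<le>n. \<not> (i = j \<or> i = k \<or> i \<in> MS) \<longrightarrow> s$i = 0) \<and> s$k = 0 \<and> D s"
        using jn jk MSjk by (subst forall_split[where k=k]) auto
      also have "\<dots> \<longleftrightarrow> Qc V E lab v x"
        using Q1 3 dd P1 D sj sk by auto
      finally show ?thesis unfolding lab'_def by simp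
    next
      case 4
      have "Qc V E lab v x \<longleftrightarrow> (\<forall>i\<le>n. \<not> (i \<in> MS) \<longrightarrow> x$i = 0) \<and> (deg E v \<noteq> 3 \<longrightarrow> D x)"
        using Q1 4 by simp
      also have "\<dots> \<longleftrightarrow> (\<forall>i\<le>n. \<not> (i = j \<or> i = k \<or> i \<in> MS) \<longrightarrow> x$i = 0) \<and> x$j = 0 \<and> x$k = 0 \<and> (deg E v \<noteq> 3 \<longrightarrow> D x)"
        using jn MSjk by auto
      also have "\<dots> \<longleftrightarrow> (\<forall>i\<le>n. \<not> (i = j \<or> i = k \<or> i \<in> MS) \<longrightarrow> s$i = 0) \<and> s$j = 0 \<and> s$k = 0 \<and> (deg E v \<noteq> 3 \<longrightarrow> D s)"
        using P1 D sj sk by auto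
      also have "\<dots> \<longleftrightarrow> (\<forall>i\<le>n. \<not> (i \<in> MS) \<longrightarrow> s$i = 0) \<and> (deg E v \<noteq> 3 \<longrightarrow> D s)"
        using jn MSjk by auto
      also have "\<dots> \<longleftrightarrow> Qc V E lab' v s"
        using Q2 4 by simp
      finally show ?thesis unfolding lab'_def by simp
    qed
  qed
qed


lemma sum2: fixes x :: "nat \<Rightarrow> 'a::comm_ring_1"
  assumes "j \<noteq> k" "j < N" "k < N"
  shows "(\<Sum>s\<in>{0..<N}. (if s = j then a else if s = k then b else 0) * x s) = a * x j + b * x k"
proof -
  have "(\<Sum>s\<in>{0..<N}. (if s = j then a else if s = k then b else 0) * x s)
     = (\<Sum>s\<in>{j,k}. (if s = j then a else if s = k then b else 0) * x s)"
    by (rule sum.mono_neutral_right) (use assms in auto)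
  also have "\<dots> = a * x j + b * x k" using assms by simp
  finally show ?thesis .
qed

lemma sum1: fixes x :: "nat \<Rightarrow> 'a::comm_ring_1"
  assumes "r < N"
  shows "(\<Sum>s\<in>{0..<N}. (if r = s then 1 else 0) * x s) = x r"
proof -
  have "(\<Sum>s\<in>{0..<N}. (if r = s then 1 else 0) * x s) = (\<Sum>s\<in>{r}. (if r = s then 1 else 0) * x s)"
    by (rule sum.mono_neutral_right) (use assms in auto)
  then show ?thesis by simp
qed

definition sig :: "nat \<Rightarrow> nat \<Rightarrow> nat \<Rightarrow> 'a::comm_ring_1 mat" where
  "sig N j k = mat N N (\<lambda>(r,s). if r = k then (if s = j then 1 else if s = k then -1 else 0)
                                  else (if r = s then 1 else 0))"

lemma sig_carrier: "sig N j k \<in> carrier_mat N N" unfolding sig_def by simp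

lemma sig_mult:
  assumes "j \<noteq> k" "j < N" "k < N" "(x :: 'a::comm_ring_1 vec) \<in> carrier_vec N"
  shows "sig N j k *\<^sub>v x = vec N (\<lambda>r. if r = k then x$j - x$k else x$r)"
proof (rule eq_vecI)
  show "dim_vec (sig N j k *\<^sub>v x) = dim_vec (vec N (\<lambda>r. if r = k then x$j - x$k else x$r))"
    unfolding sig_def by simp
  fix r assume "r < dim_vec (vec N (\<lambda>r. if r = k then x$j - x$k else x$r))"
  then have r: "r < N" by simp
  show "(sig N j k *\<^sub>v x) $ r = vec N (\<lambda>r. if r = k then x$j - x$k else x$r) $ r"
  proof (cases "r = k")
    case True
    have "(sig N j k *\<^sub>v x) $ r = (\<Sum>s\<in>{0..<N}. (if s = j then 1 else if s = k then -1 else 0) * x$s)"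
      using r True assms unfolding sig_def by (simp add: scalar_prod_def)
    also have "\<dots> = x$j - x$k" using sum2[OF assms(1-3), of 1 "-1" "\<lambda>s. x$s"] by simp
    finally show ?thesis using r True by simp
  next
    case False
    have "(sig N j k *\<^sub>v x) $ r = (\<Sum>s\<in>{0..<N}. (if r = s then 1 else 0) * x$s)"
      using r False assms unfolding sig_def by (simp add: scalar_prod_def)
    also have "\<dots> = x$r" using sum1[OF r, of "\<lambda>s. x$s"] by simp
    finally show ?thesis using r False by simp
  qed
qed

lemma mult_entry:
  assumes "A \<in> carrier_mat N N" "B \<in> carrier_mat N N" "r < N" "s < N"
  shows "(A * B) $$ (r,s) = (\<Sum>m\<in>{0..<N}. A $$ (r,m) * B $$ (m,s))"
  using assms by (simp add: scalar_prod_def)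

lemma sig_entry: "r < N \<Longrightarrow> m < N \<Longrightarrow> sig N j k $$ (r,m) =
   (if r = k then (if m = j then 1 else if m = k then -1 else 0) else (if r = m then 1 else 0))"
  unfolding sig_def by simp

lemma sig_sq:
  assumes "j \<noteq> k" "j < N" "k < N"
  shows "sig N j k * sig N j k = (1\<^sub>m N :: 'a::comm_ring_1 mat)"
proof (rule eq_matI)
  fix r s assume "r < dim_row (1\<^sub>m N :: 'a mat)" "s < dim_col (1\<^sub>m N :: 'a mat)"
  then have rs: "r < N" "s < N" by auto
  define f :: "nat \<Rightarrow> 'a" where "f = (\<lambda>m. sig N j k $$ (m,s))"
  have e: "(sig N j k * sig N j k) $$ (r, s) = (\<Sum>m\<in>{0..<N}. sig N j k $$ (r,m) * f m)"
    unfolding f_def by (rule mult_entry[OF sig_carrier sig_carrier rs])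
  show "(sig N j k * sig N j k) $$ (r, s) = (1\<^sub>m N :: 'a mat) $$ (r, s)"
  proof (cases "r = k")
    case True
    have "(\<Sum>m\<in>{0..<N}. sig N j k $$ (r,m) * f m) = (\<Sum>m\<in>{0..<N}. (if m = j then 1 else if m = k then -1 else 0) * f m)"
      by (rule sum.cong) (use rs True in \<open>auto simp: sig_entry\<close>)
    also have "\<dots> = f j - f k" using sum2[OF assms, of 1 "-1" f] by simp
    finally show ?thesis using rs True assms e unfolding f_def by (auto simp: sig_entry)
  next
    case False
    have "(\<Sum>m\<in>{0..<N}. sig N j k $$ (r,m) * f m) = (\<Sum>m\<in>{0..<N}. (if r = m then 1 else 0) * f m)"
      by (rule sum.cong) (use rs False in \<open>auto simp: sig_entry\<close>)
    also have "\<dots> = f r" using sum1[OF rs(1), of f] by simp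
    finally show ?thesis using rs False assms e unfolding f_def by (auto simp: sig_entry)
  qed
qed (auto simp: sig_def)


theorem lemma1p6:
  fixes V :: "'v set" and E :: "'v set set" and lab :: "'v tedge \<Rightarrow> label"
    and w :: 'v and a b c :: "'v tedge" and j k :: nat
  assumes "good_graph V E"
    and "admissible V E lab"
    and "w \<in> V" and "deg E w = 3"
    and "a \<in> edges_at V E w" and "b \<in> edges_at V E w" and "c \<in> edges_at V E w"
    and "lab a = Single j" and "lab b = Single k" and "lab c = Diff j k"
  shows "\<exists>\<sigma> :: 'k :: {alg_closed_field, field_char_0} mat.
           \<sigma> \<in> carrier_mat (pdim V E + 1) (pdim V E + 1) \<and> invertible_mat \<sigma> \<and>
           (\<exists>s. s \<noteq> 0 \<and> \<sigma> * \<sigma> = s \<cdot>\<^sub>m 1\<^sub>m (pdim V E + 1)) \<and>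
           (\<lambda>x. \<sigma> *\<^sub>v x) ` (CG V E lab :: 'k vec set) = CG V E (lab(a := Diff j k, c := Single j))"
proof -
  note G = assms(1) and adm = assms(2) and w = assms(3,4) and abc = assms(5-7) and l = assms(8-10)
  define n where "n = pdim V E"
  define N where "N = n + 1"
  define lab' where "lab' = lab(a := Diff j k, c := Single j)"
  define \<sigma> :: "'k mat" where "\<sigma> = sig N j k"
  have W: "edges_at V E w = {a,b,c}" and jk: "j \<noteq> k" using edges_at_w[OF adm w abc l] by auto
  have dist: "a \<noteq> b" "a \<noteq> c" "b \<noteq> c" using l jk by auto
  have tA: "a \<in> tedges V E" "b \<in> tedges V E" "c \<in> tedges V E" using abc unfolding edges_at_def by auto
  have rng: "\<forall>t\<in>tedges V E. lidx (lab t) \<subseteq> {0..n}" using adm unfolding admissible_def n_def by blast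
  have jn: "j < N" "k < N" using rng tA l unfolding N_def by auto
  have car: "\<sigma> \<in> carrier_mat N N" unfolding \<sigma>_def by (rule sig_carrier)
  have sq: "\<sigma> * \<sigma> = 1\<^sub>m N" unfolding \<sigma>_def by (rule sig_sq[OF jk jn])
  have inv: "invertible_mat \<sigma>"
    unfolding invertible_mat_def inverts_mat_def using car sq by auto
  have sm: "\<sigma> * \<sigma> = (1::'k) \<cdot>\<^sub>m 1\<^sub>m N" using sq by auto
  have mv: "\<sigma> *\<^sub>v x = vec N (\<lambda>r. if r = k then x$j - x$k else x$r)" if "x \<in> carrier_vec N" for x
    unfolding \<sigma>_def by (rule sig_mult[OF jk jn that])
  have invv: "\<sigma> *\<^sub>v (\<sigma> *\<^sub>v x) = x" if x: "x \<in> carrier_vec N" for x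
  proof -
    have "\<sigma> *\<^sub>v (\<sigma> *\<^sub>v x) = (\<sigma> * \<sigma>) *\<^sub>v x" using car x by simp
    then show ?thesis using sq x by simp
  qed
  have mvc: "\<sigma> *\<^sub>v x \<in> carrier_vec N" if "x \<in> carrier_vec N" for x using car that by simp
  have nz: "\<sigma> *\<^sub>v x \<noteq> 0\<^sub>v N" if x: "x \<in> carrier_vec N" "x \<noteq> 0\<^sub>v N" for x
  proof
    assume "\<sigma> *\<^sub>v x = 0\<^sub>v N"
    moreover have "\<sigma> *\<^sub>v 0\<^sub>v N = 0\<^sub>v N"
      unfolding mv[OF zero_carrier_vec] by (rule eq_vecI) (use jn in auto)
    ultimately have "\<sigma> *\<^sub>v (\<sigma> *\<^sub>v x) = 0\<^sub>v N" by simp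
    then show False using invv x by simp
  qed
  have rng1: "\<forall>t\<in>edges_at V E v. lidx (lab t) \<subseteq> {0..pdim V E}" for v
    using rng unfolding edges_at_def n_def by auto
  have rng2: "\<forall>t\<in>edges_at V E v. lidx (lab' t) \<subseteq> {0..pdim V E}" for v
  proof
    fix t assume t: "t \<in> edges_at V E v"
    have "t \<in> tedges V E" using t unfolding edges_at_def by auto
    then show "lidx (lab' t) \<subseteq> {0..pdim V E}"
      using rng jn unfolding lab'_def n_def N_def by auto
  qed
  have keyv: "Qc V E lab' v (\<sigma> *\<^sub>v x) \<longleftrightarrow> Qc V E lab v x" if v: "v \<in> V" and x: "x \<in> carrier_vec N" for v x
    unfolding lab'_def
  proof (rule key[OF G adm w abc l v])
    fix r assume "r \<le> pdim V E"
    then have "r < N" unfolding N_def n_def by simp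
    then show "(\<sigma> *\<^sub>v x) $ r = (if r = k then x$j - x$k else x$r)" using mv[OF x] by simp
  qed
  have L1: "line_at V E lab v = {x \<in> carrier_vec N. x \<noteq> 0\<^sub>v N \<and> Qc V E lab v x}" for v :: 'v
    unfolding N_def n_def by (rule line_at_char[OF rng1])
  have L2: "line_at V E lab' v = {x \<in> carrier_vec N. x \<noteq> 0\<^sub>v N \<and> Qc V E lab' v x}" for v :: 'v
    unfolding N_def n_def by (rule line_at_char[OF rng2])
  have img: "(\<lambda>x. \<sigma> *\<^sub>v x) ` (CG V E lab :: 'k vec set) = CG V E lab'"
  proof
    show "(\<lambda>x. \<sigma> *\<^sub>v x) ` CG V E lab \<subseteq> CG V E lab'"
    proof
      fix y assume "y \<in> (\<lambda>x. \<sigma> *\<^sub>v x) ` CG V E lab"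
      then obtain x v where v: "v \<in> V" and x: "x \<in> line_at V E lab v" and y: "y = \<sigma> *\<^sub>v x"
        unfolding CG_def by blast
      have xc: "x \<in> carrier_vec N" "x \<noteq> 0\<^sub>v N" "Qc V E lab v x" using x L1 by auto
      have "y \<in> line_at V E lab' v" unfolding L2 y using xc mvc nz keyv[OF v xc(1)] by auto
      then show "y \<in> CG V E lab'" unfolding CG_def using v by blast
    qed
  next
    show "CG V E lab' \<subseteq> (\<lambda>x. \<sigma> *\<^sub>v x) ` CG V E lab"
    proof
      fix y :: "'k vec" assume "y \<in> CG V E lab'"
      then obtain v where v: "v \<in> V" and y: "y \<in> line_at V E lab' v" unfolding CG_def by blast
      have yc: "y \<in> carrier_vec N" "y \<noteq> 0\<^sub>v N" "Qc V E lab' v y" using y L2 by auto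
      define x where "x = \<sigma> *\<^sub>v y"
      have xc: "x \<in> carrier_vec N" unfolding x_def using mvc yc by simp
      have yx: "y = \<sigma> *\<^sub>v x" unfolding x_def using invv yc by simp
      have "x \<noteq> 0\<^sub>v N" unfolding x_def using nz yc by simp
      moreover have "Qc V E lab v x" using keyv[OF v xc] yx yc by simp
      ultimately have "x \<in> line_at V E lab v" unfolding L1 using xc by simp
      then have "x \<in> CG V E lab" unfolding CG_def using v by blast
      then show "y \<in> (\<lambda>x. \<sigma> *\<^sub>v x) ` CG V E lab" using yx by blast
    qed
  qed
  show ?thesis
    apply (rule exI[of _ \<sigma>])
    apply (intro conjI exI[of _ "1::'k"])
    using car inv sm img unfolding N_def n_def lab'_def by auto
qed

end
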